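(* Let $V\in L^\infty(\mathbb{R})$ be real-valued and $h>0$. For every $x\in\mathbb{R}$, the operator $\mathbf B(x)$ is bounded on $\ell^2(\mathbb{Z})$ with $$\|\mathbf B(x)\|_{\ell^2\to\ell^2}\le\frac{2}{\pi h}\|V\|_{L^\infty}.$$
   Context: $R^h=\frac1{2h}$, $v_n=(n+\frac12)\frac{\pi}{R^h}=2\pi(n+\frac12)h$, $n\in\mathbb{Z}$. $D_V(x,y)=V(x+y/2)-V(x-y/2)$, $V_w^R(x,v)=\frac{i}{2\pi}\int_{|y|<R^h}D_V(x,y)e^{ivy}\,dy$, $\mathbf A(x)_{nm}=\frac{\pi}{R^h}V_w^R(x,v_n-v_m)$, and $\mathbf B(x)_{nm}=\frac{\operatorname{sign}(v_n)}{\sqrt{|v_n|}}\mathbf A(x)_{nm}\frac{1}{\sqrt{|v_m|}}$. *)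

theory Defs
  imports "HOL-Analysis.Analysis"
begin

definition R_h :: "real \<Rightarrow> real" where
  "R_h h = 1 / (2 * h)"

definition v_n :: "real \<Rightarrow> int \<Rightarrow> real" where
  "v_n h n = (real_of_int n + 1/2) * pi / R_h h"

definition D_V :: "(real \<Rightarrow> real) \<Rightarrow> real \<Rightarrow> real \<Rightarrow> real" where
  "D_V V x y = V (x + y/2) - V (x - y/2)"

definition Vw_R :: "(real \<Rightarrow> real) \<Rightarrow> real \<Rightarrow> real \<Rightarrow> real \<Rightarrow> complex" where
  "Vw_R V h x v = (\<i> / (2 * complex_of_real pi)) *
     (LINT y:{y. \<bar>y\<bar> < R_h h}|lebesgue. complex_of_real (D_V V x y) * exp (\<i> * complex_of_real (v * y)))"

definition A_mat :: "(real \<Rightarrow> real) \<Rightarrow> real \<Rightarrow> real \<Rightarrow> int \<Rightarrow> int \<Rightarrow> complex" where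
  "A_mat V h x n m = complex_of_real (pi / R_h h) * Vw_R V h x (v_n h n - v_n h m)"

definition B_mat :: "(real \<Rightarrow> real) \<Rightarrow> real \<Rightarrow> real \<Rightarrow> int \<Rightarrow> int \<Rightarrow> complex" where
  "B_mat V h x n m = complex_of_real (sgn (v_n h n) / sqrt \<bar>v_n h n\<bar>) * A_mat V h x n m
                     * complex_of_real (1 / sqrt \<bar>v_n h m\<bar>)"

definition is_l2 :: "(int \<Rightarrow> complex) \<Rightarrow> bool" where
  "is_l2 u \<longleftrightarrow> (\<lambda>m. (norm (u m))^2) summable_on UNIV"

definition l2_norm :: "(int \<Rightarrow> complex) \<Rightarrow> real" where
  "l2_norm u = sqrt (\<Sum>\<^sub>\<infinity>m. (norm (u m))^2)"

definition bounded_on_l2_with_norm :: "(int \<Rightarrow> int \<Rightarrow> complex) \<Rightarrow> real \<Rightarrow> bool" where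
  "bounded_on_l2_with_norm M C \<longleftrightarrow>
     (\<forall>u. is_l2 u \<longrightarrow>
        (\<forall>n. (\<lambda>m. M n m * u m) summable_on UNIV) \<and>
        is_l2 (\<lambda>n. \<Sum>\<^sub>\<infinity>m. M n m * u m) \<and>
        l2_norm (\<lambda>n. \<Sum>\<^sub>\<infinity>m. M n m * u m) \<le> C * l2_norm u)"

definition Linf_norm :: "(real \<Rightarrow> real) \<Rightarrow> real" where
  "Linf_norm V = Inf {M. M \<ge> 0 \<and> (AE y in lebesgue. \<bar>V y\<bar> \<le> M)}"

definition in_Linf :: "(real \<Rightarrow> real) \<Rightarrow> bool" where
  "in_Linf V \<longleftrightarrow> V \<in> borel_measurable lebesgue \<and> (\<exists>M. AE y in lebesgue. \<bar>V y\<bar> \<le> M)"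

end

theory Submission
  imports Defs
begin


lemma bil_scale:
  fixes M :: "int \<Rightarrow> int \<Rightarrow> complex"
  assumes C: "C \<ge> 0"
  and H: "\<And>F G w u. finite F \<Longrightarrow> finite G \<Longrightarrow>
      norm (\<Sum>n\<in>F. \<Sum>m\<in>G. w n * M n m * u m) \<le> C/2 * ((\<Sum>n\<in>F. (norm (w n))^2) + (\<Sum>m\<in>G. (norm (u m))^2))"
  and F: "finite F" and G: "finite G"
  shows "norm (\<Sum>n\<in>F. \<Sum>m\<in>G. w n * M n m * u m) \<le> C * sqrt (\<Sum>n\<in>F. (norm (w n))^2) * sqrt (\<Sum>m\<in>G. (norm (u m))^2)"
proof -
  define a2 where "a2 = (\<Sum>n\<in>F. (norm (w n))^2)"
  define b2 where "b2 = (\<Sum>m\<in>G. (norm (u m))^2)"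
  have a0: "a2 \<ge> 0" "b2 \<ge> 0" unfolding a2_def b2_def by (auto intro: sum_nonneg)
  show ?thesis
  proof (cases "a2 = 0 \<or> b2 = 0")
    case True
    then show ?thesis
    proof
      assume "a2 = 0"
      then have "\<forall>n\<in>F. w n = 0" unfolding a2_def using F by (simp add: sum_nonneg_eq_0_iff)
      then show ?thesis by simp
    next
      assume "b2 = 0"
      then have "\<forall>m\<in>G. u m = 0" unfolding b2_def using G by (simp add: sum_nonneg_eq_0_iff)
      then show ?thesis by simp
    qed
  next
    case False
    then have ap: "a2 > 0" "b2 > 0" using a0 by auto
    define a where "a = sqrt a2"
    define b where "b = sqrt b2"
    have abp: "a > 0" "b > 0" using ap unfolding a_def b_def by auto
    define t where "t = sqrt (b / a)"
    have tp: "t > 0" using abp unfolding t_def by auto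
    have t2: "t^2 = b/a" unfolding t_def using abp by simp
    define w' where "w' n = complex_of_real t * w n" for n
    define u' where "u' m = u m / complex_of_real t" for m
    have eq: "(\<Sum>n\<in>F. \<Sum>m\<in>G. w' n * M n m * u' m) = (\<Sum>n\<in>F. \<Sum>m\<in>G. w n * M n m * u m)"
      unfolding w'_def u'_def using tp by (intro sum.cong refl) (simp add: field_simps)
    have s1: "(\<Sum>n\<in>F. (norm (w' n))^2) = t^2 * a2"
      unfolding w'_def a2_def using tp by (simp add: norm_mult power_mult_distrib sum_distrib_left)
    have s2: "(\<Sum>m\<in>G. (norm (u' m))^2) = b2 / t^2"
      unfolding u'_def b2_def using tp by (simp add: norm_divide power_divide sum_divide_distrib)
    have aa: "a2 = a*a" "b2 = b*b" unfolding a_def b_def using a0 by simp_all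
    have "t^2 * a2 = a * b" using t2 abp aa by (simp add: field_simps)
    moreover have "b2 / t^2 = a * b" using t2 abp aa tp by (simp add: field_simps power2_eq_square)
    ultimately have "norm (\<Sum>n\<in>F. \<Sum>m\<in>G. w n * M n m * u m) \<le> C/2 * (a*b + a*b)"
      using H[OF F G, of w' u'] eq s1 s2 by simp
    then show ?thesis unfolding a_def b_def a2_def b2_def by (simp add: mult.commute mult.left_commute)
  qed
qed

lemma bil_bounded:
  fixes M :: "int \<Rightarrow> int \<Rightarrow> complex"
  assumes C: "C \<ge> 0"
  and H: "\<And>F G w u. finite F \<Longrightarrow> finite G \<Longrightarrow>
      norm (\<Sum>n\<in>F. \<Sum>m\<in>G. w n * M n m * u m) \<le> C/2 * ((\<Sum>n\<in>F. (norm (w n))^2) + (\<Sum>m\<in>G. (norm (u m))^2))"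
  shows "bounded_on_l2_with_norm M C"
proof -
  have BS: "norm (\<Sum>n\<in>F. \<Sum>m\<in>G. w n * M n m * u m) \<le> C * sqrt (\<Sum>n\<in>F. (norm (w n))^2) * sqrt (\<Sum>m\<in>G. (norm (u m))^2)"
    if "finite F" "finite G" for F G w u
    apply (rule bil_scale[OF C])
      apply (rule H, assumption, assumption)
    using that by auto
  have row: "(\<Sum>m\<in>G. (norm (M n m))^2) \<le> C^2" if G: "finite G" for n G
  proof -
    define S where "S = (\<Sum>m\<in>G. (norm (M n m))^2)"
    have S0: "S \<ge> 0" unfolding S_def by (auto intro: sum_nonneg)
    have eq: "(\<Sum>n'\<in>{n}. \<Sum>m\<in>G. 1 * M n' m * cnj (M n m)) = complex_of_real S"
      unfolding S_def of_real_sum by (simp only: sum.insert_if sum.empty finite.emptyI empty_iff if_False add_0_right mult_1_left complex_norm_square)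
    have "norm (\<Sum>n'\<in>{n}. \<Sum>m\<in>G. 1 * M n' m * cnj (M n m)) \<le> C * sqrt S"
      using BS[of "{n}" G "\<lambda>_. 1" "\<lambda>m. cnj (M n m)"] G by (simp add: S_def)
    then have "S \<le> C * sqrt 1 * sqrt S" unfolding eq using S0 by simp
    then have "S \<le> C * sqrt S" by simp
    then show ?thesis
    proof (cases "S = 0")
      case False
      then have "sqrt S > 0" using S0 by simp
      moreover have "sqrt S * sqrt S \<le> C * sqrt S" using \<open>S \<le> C * sqrt S\<close> S0 by simp
      ultimately have "sqrt S \<le> C" by (metis mult_right_le_imp_le)
      then have "sqrt S ^ 2 \<le> C^2" using S0 by (intro power_mono) auto
      then show ?thesis using S0 by (simp add: S_def)
    qed (simp add: S_def[symmetric])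
  qed
  have rowsum: "(\<lambda>m. (norm (M n m))^2) summable_on UNIV" for n
    by (rule nonneg_bdd_above_summable_on) (use row in \<open>auto simp: bdd_above_def\<close>)
  show ?thesis unfolding bounded_on_l2_with_norm_def
  proof (intro allI impI conjI)
    fix u assume u: "is_l2 u"
    then have usum: "(\<lambda>m. (norm (u m))^2) summable_on UNIV" unfolding is_l2_def .
    show rs: "(\<lambda>m. M n m * u m) summable_on UNIV" for n
    proof (rule abs_summable_summable)
      have "(\<lambda>m. ((norm (M n m))^2 + (norm (u m))^2)) summable_on UNIV"
        using summable_on_add[OF rowsum[of n] usum] by simp
      then show "(\<lambda>m. norm (M n m * u m)) summable_on UNIV"
      proof (rule summable_on_comparison_test)
        fix m
        have "2 * (norm (M n m) * norm (u m)) \<le> (norm (M n m))^2 + (norm (u m))^2"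
          using sum_squares_bound[of "norm (M n m)" "norm (u m)"] by (simp add: mult.assoc)
        moreover have "0 \<le> norm (M n m) * norm (u m)" by simp
        ultimately show "norm (M n m * u m) \<le> ((norm (M n m))^2 + (norm (u m))^2)"
          unfolding norm_mult by linarith
      qed simp
    qed
    define y where "y n = (\<Sum>\<^sub>\<infinity>m. M n m * u m)" for n
    define K where "K = l2_norm u"
    have K0: "K \<ge> 0" unfolding K_def l2_norm_def by (simp add: infsum_nonneg)
    have fin: "(\<Sum>n\<in>N. (norm (y n))^2) \<le> (C * K)^2" if N: "finite N" for N
    proof -
      define T where "T = (\<Sum>n\<in>N. (norm (y n))^2)"
      have T0: "T \<ge> 0" unfolding T_def by (auto intro: sum_nonneg)
      have lim: "((\<lambda>G. \<Sum>n\<in>N. cnj (y n) * (\<Sum>m\<in>G. M n m * u m)) \<longlongrightarrow> (\<Sum>n\<in>N. cnj (y n) * y n))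
                  (finite_subsets_at_top UNIV)"
      proof (intro tendsto_sum tendsto_mult tendsto_const)
        fix n show "((\<lambda>G. \<Sum>m\<in>G. M n m * u m) \<longlongrightarrow> y n) (finite_subsets_at_top UNIV)"
          using rs[of n] unfolding y_def by (simp add: has_sum_def[symmetric])
      qed
      have "norm (\<Sum>n\<in>N. cnj (y n) * y n) \<le> C * sqrt T * K"
      proof (rule Lim_norm_ubound[OF _ lim])
        show "\<forall>\<^sub>F G in finite_subsets_at_top UNIV. norm (\<Sum>n\<in>N. cnj (y n) * (\<Sum>m\<in>G. M n m * u m)) \<le> C * sqrt T * K"
        proof (rule eventually_finite_subsets_at_top_weakI)
          fix G :: "int set" assume G: "finite G"
          have "(\<Sum>n\<in>N. cnj (y n) * (\<Sum>m\<in>G. M n m * u m)) = (\<Sum>n\<in>N. \<Sum>m\<in>G. cnj (y n) * M n m * u m)"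
            by (simp add: sum_distrib_left mult.assoc)
          also have "norm \<dots> \<le> C * sqrt (\<Sum>n\<in>N. (norm (cnj (y n)))^2) * sqrt (\<Sum>m\<in>G. (norm (u m))^2)"
            by (rule BS[OF N G])
          also have "\<dots> \<le> C * sqrt T * K"
          proof -
            have "(\<Sum>m\<in>G. (norm (u m))^2) \<le> (\<Sum>\<^sub>\<infinity>m. (norm (u m))^2)"
              using finite_sum_le_infsum[OF usum G] by simp
            then have k: "sqrt (\<Sum>m\<in>G. (norm (u m))^2) \<le> K" unfolding K_def l2_norm_def by simp
            have "sqrt (\<Sum>n\<in>N. (norm (cnj (y n)))^2) = sqrt T" by (simp add: T_def)
            moreover have "C * sqrt T * sqrt (\<Sum>m\<in>G. (norm (u m))^2) \<le> C * sqrt T * K"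
              using k C T0 by (intro mult_left_mono) auto
            ultimately show ?thesis by simp
          qed
          finally show "norm (\<Sum>n\<in>N. cnj (y n) * (\<Sum>m\<in>G. M n m * u m)) \<le> C * sqrt T * K" .
        qed
      qed simp
      moreover have "(\<Sum>n\<in>N. cnj (y n) * y n) = complex_of_real T"
        unfolding T_def of_real_sum by (intro sum.cong refl) (simp only: complex_norm_square mult.commute)
      ultimately have TT: "T \<le> C * sqrt T * K" using T0 by simp
      show ?thesis
      proof (cases "T = 0")
        case False
        then have "sqrt T > 0" using T0 by simp
        moreover have "sqrt T * sqrt T \<le> (C * K) * sqrt T" using TT T0 by (simp add: mult_ac)
        ultimately have "sqrt T \<le> C * K" by (metis mult_right_le_imp_le)
        then have "sqrt T ^ 2 \<le> (C*K)^2" using T0 by (intro power_mono) auto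
        then show ?thesis using T0 by (simp add: T_def)
      qed (simp add: T_def[symmetric])
    qed
    have ysum: "(\<lambda>n. (norm (y n))^2) summable_on UNIV"
      by (rule nonneg_bdd_above_summable_on) (use fin in \<open>auto simp: bdd_above_def\<close>)
    then show "is_l2 (\<lambda>n. \<Sum>\<^sub>\<infinity>m. M n m * u m)" unfolding is_l2_def y_def .
    have "(\<Sum>\<^sub>\<infinity>n. (norm (y n))^2) \<le> (C*K)^2"
      by (rule infsum_le_finite_sums[OF ysum]) (use fin in auto)
    then have "sqrt (\<Sum>\<^sub>\<infinity>n. (norm (y n))^2) \<le> sqrt ((C*K)^2)" by (rule real_sqrt_le_mono)
    also have "\<dots> = C * K" using C K0 by simp
    finally show "l2_norm (\<lambda>n. \<Sum>\<^sub>\<infinity>m. M n m * u m) \<le> C * l2_norm u"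
      unfolding l2_norm_def y_def K_def l2_norm_def .
  qed
qed



lemma cont_meas:
  fixes f :: "real \<Rightarrow> 'b::{second_countable_topology,topological_space}"
  assumes "continuous_on UNIV f" shows "f \<in> borel_measurable lebesgue"
  using measurable_comp[OF id_borel_measurable_lebesgue borel_measurable_continuous_onI[OF assms]]
  by (simp add: comp_def)

lemma set_int_bounded:
  fixes f :: "real \<Rightarrow> 'b::{banach, second_countable_topology}" and a b K :: real
  assumes f: "f \<in> borel_measurable lebesgue"
    and bd: "AE y in lebesgue. y \<in> {a<..<b} \<longrightarrow> norm (f y) \<le> K"
  shows "set_integrable lebesgue {a<..<b} f"
proof (rule set_integrable_bound[where f="\<lambda>_. K"])
  show "set_integrable lebesgue {a<..<b} (\<lambda>_. K)"
    unfolding set_integrable_def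
    using lmeasurable_interval(2)[of a b]
    by (intro integrable_scaleR_left integrable_real_indicator) (auto simp: fmeasurable_def)
  show "set_borel_measurable lebesgue {a<..<b} f"
  proof -
    have "{a<..<b} \<in> sets lebesgue" using lmeasurable_interval(2)[of a b] by (simp add: fmeasurable_def)
    then show ?thesis unfolding set_borel_measurable_def
      by (intro borel_measurable_scaleR borel_measurable_indicator f)
  qed
  show "AE x in lebesgue. x \<in> {a<..<b} \<longrightarrow> norm (f x) \<le> norm K"
    using bd by eventually_elim auto
qed

lemma meas_exp: "(\<lambda>y::real. exp (\<i> * complex_of_real (k * y))) \<in> borel_measurable lebesgue"
  by (intro cont_meas continuous_intros)

lemma ortho:
  fixes h :: real and j :: int
  assumes h: "h > 0"
  shows "(LINT y:{-R_h h<..<R_h h}|lebesgue. exp (\<i> * complex_of_real (2*pi*h*j * y)))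
       = (if j = 0 then complex_of_real (1/h) else 0)"
proof -
  define R where "R = R_h h"
  have R: "R > 0" "R = 1/(2*h)" using h unfolding R_def R_h_def by auto
  define k where "k = 2*pi*h*j"
  define f where "f y = exp (\<i> * complex_of_real (k * y))" for y
  have int: "set_integrable lebesgue {-R<..<R} f"
    unfolding f_def apply (rule set_int_bounded[where K=1]) apply (rule meas_exp) by auto
  have hi: "(f has_integral (LINT y:{-R<..<R}|lebesgue. f y)) {-R<..<R}"
    by (rule has_integral_set_lebesgue[OF int])
  have val: "(f has_integral (if j = 0 then complex_of_real (1/h) else 0)) {-R..R}"
  proof (cases "j = 0")
    case True
    then have ff: "f = (\<lambda>_. 1)" unfolding f_def k_def by auto
    have "((\<lambda>y. complex_of_real y) has_vector_derivative 1) (at y within {-R..R})" for y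
      by (rule has_vector_derivative_real_field) (auto intro!: derivative_eq_intros)
    from fundamental_theorem_of_calculus[of "-R" R, OF _ this] R
    have "((\<lambda>_. 1::complex) has_integral (complex_of_real R - complex_of_real (-R))) {-R..R}" by simp
    moreover have "complex_of_real R - complex_of_real (-R) = complex_of_real (1/h)"
    proof -
      have "R - (-R) = 1/h" using R h by (simp add: field_simps)
      then show ?thesis by (metis of_real_diff)
    qed
    ultimately show ?thesis using True ff by simp
  next
    case False
    then have k0: "k \<noteq> 0" unfolding k_def using h by auto
    define G where "G z = exp (\<i> * complex_of_real k * z) / (\<i> * complex_of_real k)" for z
    have "((\<lambda>y. G (complex_of_real y)) has_vector_derivative f y) (at y within {-R..R})" for y
    proof (rule has_vector_derivative_real_field)
      show "(G has_field_derivative f y) (at (complex_of_real y))"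
        unfolding G_def f_def using k0
        by (auto intro!: derivative_eq_intros simp: field_simps)
    qed
    from fundamental_theorem_of_calculus[of "-R" R, OF _ this] R
    have "(f has_integral (G (complex_of_real R) - G (complex_of_real (-R)))) {-R..R}" by simp
    moreover have "G (complex_of_real R) - G (complex_of_real (-R)) = 0"
    proof -
      have kR: "k * R = pi * j" unfolding k_def using R h by (simp add: field_simps)
      have "exp (\<i> * complex_of_real k * complex_of_real R) = exp (\<i> * complex_of_real k * complex_of_real (-R))"
      proof -
        have e: "complex_of_real k * complex_of_real R = complex_of_real pi * of_int j"
          using kR by (metis of_real_mult of_real_of_int_eq)
        have "\<i> * complex_of_real k * complex_of_real R = \<i> * complex_of_real k * complex_of_real (-R) + (of_int (2 * j) * pi) * \<i>"
        proof -
          have "\<i> * complex_of_real k * complex_of_real R - \<i> * complex_of_real k * complex_of_real (-R)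
              = 2 * \<i> * (complex_of_real k * complex_of_real R)" by (simp add: algebra_simps)
          also have "\<dots> = (of_int (2 * j) * pi) * \<i>" unfolding e by simp
          finally show ?thesis by (simp add: algebra_simps)
        qed
        then show ?thesis unfolding exp_eq by blast
      qed
      then show ?thesis unfolding G_def by simp
    qed
    ultimately show ?thesis using False by simp
  qed
  then have "(f has_integral (if j = 0 then complex_of_real (1/h) else 0)) {-R<..<R}"
    by (simp add: has_integral_Icc_iff_Ioo)
  with hi have "(LINT y:{-R<..<R}|lebesgue. f y) = (if j = 0 then complex_of_real (1/h) else 0)"
    by (rule has_integral_unique)
  then show ?thesis unfolding f_def k_def R_def .
qed

lemma set_int_sum:
  fixes f :: "'i \<Rightarrow> 'a \<Rightarrow> 'b::{banach, second_countable_topology}"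
  assumes "\<And>i. i \<in> I \<Longrightarrow> set_integrable M A (f i)"
  shows "set_integrable M A (\<lambda>y. \<Sum>i\<in>I. f i y)"
    and "(LINT y:A|M. \<Sum>i\<in>I. f i y) = (\<Sum>i\<in>I. LINT y:A|M. f i y)"
proof -
  show "set_integrable M A (\<lambda>y. \<Sum>i\<in>I. f i y)"
    unfolding set_integrable_def scaleR_sum_right
    by (intro Bochner_Integration.integrable_sum) (use assms in \<open>simp add: set_integrable_def\<close>)
  show "(LINT y:A|M. \<Sum>i\<in>I. f i y) = (\<Sum>i\<in>I. LINT y:A|M. f i y)"
    unfolding set_lebesgue_integral_def scaleR_sum_right
    by (intro Bochner_Integration.integral_sum) (use assms in \<open>simp add: set_integrable_def\<close>)
qed

lemma exp_prod_lemma: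
  "exp (\<i> * complex_of_real (a * y)) * exp (- (\<i> * complex_of_real (b * y))) = exp (\<i> * complex_of_real ((a - b) * y))"
  by (subst exp_add[symmetric]) (simp add: algebra_simps)

lemma normsq_int:
  fixes c :: "int \<Rightarrow> complex" and \<phi> :: "int \<Rightarrow> real" and s :: int and h :: real
  assumes h: "h > 0" and F: "finite F" and s: "s \<noteq> 0"
    and \<phi>: "\<And>n n'. \<phi> n - \<phi> n' = 2*pi*h* of_int (s*(n-n'))"
  shows "set_integrable lebesgue {-R_h h<..<R_h h} (\<lambda>y. (norm (\<Sum>n\<in>F. c n * exp (\<i> * complex_of_real (\<phi> n * y))))^2)"
    and "(LINT y:{-R_h h<..<R_h h}|lebesgue. (norm (\<Sum>n\<in>F. c n * exp (\<i> * complex_of_real (\<phi> n * y))))^2)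
         = (1/h) * (\<Sum>n\<in>F. (norm (c n))^2)"
proof -
  define P where "P y = (\<Sum>n\<in>F. c n * exp (\<i> * complex_of_real (\<phi> n * y)))" for y
  define S where "S = {-R_h h<..<R_h h}"
  define e where "e n n' y = exp (\<i> * complex_of_real (2*pi*h* of_int (s*(n-n')) * y))" for n n' y
  have Pc: "continuous_on UNIV P" unfolding P_def by (intro continuous_intros)
  have Pb: "norm (P y) \<le> (\<Sum>n\<in>F. norm (c n))" for y
    unfolding P_def by (rule order.trans[OF norm_sum]) (simp add: norm_mult)
  show int: "set_integrable lebesgue {-R_h h<..<R_h h} (\<lambda>y. (norm (P y))^2)"
  proof (rule set_int_bounded[where K="(\<Sum>n\<in>F. norm (c n))^2"])
    show "(\<lambda>y. (norm (P y))^2) \<in> borel_measurable lebesgue"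
      by (intro cont_meas continuous_intros Pc)
    show "AE y in lebesgue. y \<in> {-R_h h<..<R_h h} \<longrightarrow> norm ((norm (P y))^2) \<le> (\<Sum>n\<in>F. norm (c n))^2"
      using Pb by (auto intro!: power_mono)
  qed
  have pw: "complex_of_real ((norm (P y))^2) = (\<Sum>n\<in>F. \<Sum>n'\<in>F. c n * cnj (c n') * e n n' y)" for y
  proof -
    have "complex_of_real ((norm (P y))^2) = P y * cnj (P y)" by (rule complex_norm_square)
    also have "\<dots> = (\<Sum>n\<in>F. \<Sum>n'\<in>F. (c n * exp (\<i> * complex_of_real (\<phi> n * y))) * (cnj (c n') * exp (- (\<i> * complex_of_real (\<phi> n' * y)))))"
      unfolding P_def by (simp add: sum_product exp_cnj)
    also have "\<dots> = (\<Sum>n\<in>F. \<Sum>n'\<in>F. c n * cnj (c n') * e n n' y)"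
    proof (intro sum.cong refl)
      fix n n'
      have "(c n * exp (\<i> * complex_of_real (\<phi> n * y))) * (cnj (c n') * exp (- (\<i> * complex_of_real (\<phi> n' * y))))
          = c n * cnj (c n') * (exp (\<i> * complex_of_real (\<phi> n * y)) * exp (- (\<i> * complex_of_real (\<phi> n' * y))))"
        by (simp add: mult_ac)
      also have "\<dots> = c n * cnj (c n') * e n n' y"
        unfolding exp_prod_lemma e_def \<phi> ..
      finally show "(c n * exp (\<i> * complex_of_real (\<phi> n * y))) * (cnj (c n') * exp (- (\<i> * complex_of_real (\<phi> n' * y)))) = c n * cnj (c n') * e n n' y" .
    qed
    finally show ?thesis .
  qed
  have eint: "set_integrable lebesgue S (e n n')" for n n'
    unfolding e_def S_def apply (rule set_int_bounded[where K=1]) apply (rule meas_exp) by auto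
  have eval: "(LINT y:S|lebesgue. e n n' y) = (if n = n' then complex_of_real (1/h) else 0)" for n n'
  proof -
    have "(LINT y:S|lebesgue. e n n' y) = (if s*(n-n') = 0 then complex_of_real (1/h) else 0)"
      unfolding e_def S_def by (rule ortho[OF h])
    then show ?thesis using s by simp
  qed
  have "complex_of_real (LINT y:S|lebesgue. (norm (P y))^2) = (LINT y:S|lebesgue. complex_of_real ((norm (P y))^2))"
    by (rule set_integral_complex_of_real[symmetric])
  also have "\<dots> = (LINT y:S|lebesgue. (\<Sum>n\<in>F. \<Sum>n'\<in>F. c n * cnj (c n') * e n n' y))"
    unfolding pw ..
  also have "\<dots> = (\<Sum>n\<in>F. \<Sum>n'\<in>F. c n * cnj (c n') * (LINT y:S|lebesgue. e n n' y))"
    by (simp add: set_int_sum eint)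
  also have "\<dots> = (\<Sum>n\<in>F. c n * cnj (c n) * complex_of_real (1/h))"
    unfolding eval by (simp add: if_distrib sum.delta[OF F] sum.delta'[OF F] cong: if_cong)
  also have "\<dots> = complex_of_real ((1/h) * (\<Sum>n\<in>F. (norm (c n))^2))"
    by (simp add: complex_norm_square[symmetric] sum_distrib_left sum_divide_distrib mult_ac)
  finally show "(LINT y:{-R_h h<..<R_h h}|lebesgue. (norm (\<Sum>n\<in>F. c n * exp (\<i> * complex_of_real (\<phi> n * y))))^2)
         = (1/h) * (\<Sum>n\<in>F. (norm (c n))^2)"
    unfolding P_def S_def of_real_eq_iff .
qed



lemma linf_ae:
  assumes "in_Linf V"
  shows "Linf_norm V \<ge> 0" "AE z in lebesgue. \<bar>V z\<bar> \<le> Linf_norm V"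
proof -
  define Ms where "Ms = {M. M \<ge> 0 \<and> (AE y in lebesgue. \<bar>V y\<bar> \<le> M)}"
  obtain M0 where M0: "AE y in lebesgue. \<bar>V y\<bar> \<le> M0" using assms unfolding in_Linf_def by auto
  have "max M0 0 \<in> Ms" unfolding Ms_def using M0 by (auto elim: eventually_mono)
  then have ne: "Ms \<noteq> {}" by auto
  have bb: "bdd_below Ms" unfolding Ms_def bdd_below_def by auto
  have L: "Linf_norm V = Inf Ms" unfolding Linf_norm_def Ms_def ..
  show "Linf_norm V \<ge> 0" unfolding L by (rule cInf_greatest[OF ne]) (auto simp: Ms_def)
  have "AE z in lebesgue. \<bar>V z\<bar> \<le> Inf Ms + 1 / real (Suc k)" for k
  proof -
    have "Inf Ms < Inf Ms + 1 / real (Suc k)" by simp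
    then obtain M where M: "M \<in> Ms" "M < Inf Ms + 1 / real (Suc k)"
      using cInf_lessD[OF ne] by blast
    then show ?thesis unfolding Ms_def by (auto elim: eventually_mono)
  qed
  then have "AE z in lebesgue. \<forall>k. \<bar>V z\<bar> \<le> Inf Ms + 1 / real (Suc k)"
    by (simp add: AE_all_countable)
  then show "AE z in lebesgue. \<bar>V z\<bar> \<le> Linf_norm V"
  proof eventually_elim
    case (elim z)
    show ?case unfolding L
    proof (rule field_le_epsilon)
      fix e :: real assume "e > 0"
      then obtain k where k: "inverse (real (Suc k)) < e" using reals_Archimedean by blast
      have "\<bar>V z\<bar> \<le> Inf Ms + 1 / real (Suc k)" using elim by blast
      then show "\<bar>V z\<bar> \<le> Inf Ms + e" using k unfolding inverse_eq_divide by linarith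
    qed
  qed
qed

lemma ae_affine:
  fixes V :: "real \<Rightarrow> real"
  assumes Vm: "V \<in> borel_measurable lebesgue" and ae: "AE z in lebesgue. \<bar>V z\<bar> \<le> L" and c: "c \<noteq> 0"
  shows "AE y in lebesgue. \<bar>V (t + c * y)\<bar> \<le> L"
proof -
  have Tm: "(\<lambda>y. t + c * y) \<in> lebesgue \<rightarrow>\<^sub>M lebesgue"
    using lebesgue_affine_measurable[where c= "\<lambda>x::real. c"] c by simp
  have "AE z in density (distr lebesgue lebesgue (\<lambda>y. t + c * y)) (\<lambda>_. ennreal \<bar>c\<bar>). \<bar>V z\<bar> \<le> L"
    using ae by (subst (asm) lebesgue_real_affine[OF c, of t])
  then have "AE z in distr lebesgue lebesgue (\<lambda>y. t + c * y). \<bar>V z\<bar> \<le> L"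
    using c by (subst (asm) AE_density) auto
  moreover have "{z \<in> space lebesgue. \<bar>V z\<bar> \<le> L} \<in> sets lebesgue"
    using Vm by measurable
  ultimately show ?thesis by (subst (asm) AE_distr_iff[OF Tm]) auto
qed



lemma exp_prod2:
  "exp (\<i> * complex_of_real (a * y)) * exp (\<i> * complex_of_real ((- b) * y)) = exp (\<i> * complex_of_real ((a - b) * y))"
  by (subst exp_add[symmetric]) (simp add: algebra_simps)

theorem mainTheorem8:
  fixes V :: "real \<Rightarrow> real" and h :: real and x :: real
  assumes "in_Linf V" and "h > 0"
  shows "bounded_on_l2_with_norm (B_mat V h x) (2 / (pi * h) * Linf_norm V)"
proof -
  have h: "h > 0" by (rule assms(2))
  define L where "L = Linf_norm V"
  have L0: "L \<ge> 0" and aeV: "AE z in lebesgue. \<bar>V z\<bar> \<le> L"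
    using linf_ae[OF assms(1)] by (auto simp: L_def)
  have Vm: "V \<in> borel_measurable lebesgue" using assms(1) by (simp add: in_Linf_def)
  define D where "D y = D_V V x y" for y
  have Deq: "D = (\<lambda>y. V (x + (1/2) *\<^sub>R y) - V (x + (-1/2) *\<^sub>R y))"
    by (auto simp: D_def D_V_def fun_eq_iff)
  have Dm: "D \<in> borel_measurable lebesgue" unfolding Deq
    by (intro borel_measurable_diff borel_measurable_affine[OF Vm]) auto
  have ae1: "AE y in lebesgue. \<bar>V (x + (1/2) * y)\<bar> \<le> L" by (rule ae_affine[OF Vm aeV]) simp
  have ae2: "AE y in lebesgue. \<bar>V (x + (-1/2) * y)\<bar> \<le> L" by (rule ae_affine[OF Vm aeV]) simp
  have Db: "AE y in lebesgue. \<bar>D y\<bar> \<le> 2*L"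
    using ae1 ae2 by eventually_elim (simp add: Deq)
  define R where "R = R_h h"
  define S where "S = {-R<..<R}"
  have Seq: "{y. \<bar>y\<bar> < R_h h} = S" by (auto simp: S_def R_def)
  define v where "v n = v_n h n" for n
  have vform: "v n = of_int (2*n+1) * (pi*h)" for n
    using h by (simp add: v_def v_n_def R_h_def field_simps)
  have vdiff: "v n - v m = 2*pi*h* of_int (1*(n-m))" for n m
    unfolding vform by (simp add: algebra_simps)
  have vdiff': "(- v n) - (- v m) = 2*pi*h* of_int ((-1)*(n-m))" for n m
    unfolding vform by (simp add: algebra_simps)
  have vb: "\<bar>v n\<bar> \<ge> pi*h" for n
  proof -
    have "\<bar>2*n+1\<bar> \<ge> (1::int)" by presburger
    then have "\<bar>real_of_int (2*n+1)\<bar> \<ge> 1" by linarith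
    then have "\<bar>real_of_int (2*n+1)\<bar> * (pi*h) \<ge> 1 * (pi*h)" using h by (intro mult_right_mono) auto
    then show ?thesis unfolding vform using h by (simp add: abs_mult)
  qed
  have vpos: "\<bar>v n\<bar> > 0" for n
  proof -
    have "pi * h > 0" using h pi_gt_zero by (rule mult_pos_pos[rotated])
    then show ?thesis using vb[of n] by linarith
  qed
  define c0 where "c0 n = complex_of_real (sgn (v n) / sqrt \<bar>v n\<bar>)" for n
  define d0 where "d0 m = complex_of_real (1 / sqrt \<bar>v m\<bar>)" for m
  have inv_b: "1 / \<bar>v n\<bar> \<le> 1/(pi*h)" for n
    using vb[of n] h vpos[of n] by (intro divide_left_mono) (auto intro: mult_pos_pos)
  have c0b: "(norm (c0 n))^2 \<le> 1/(pi*h)" for n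
  proof -
    have "(norm (c0 n))^2 = 1 / \<bar>v n\<bar>" using vpos[of n]
      by (simp add: c0_def norm_divide abs_sgn power_divide sgn_if)
    then show ?thesis using inv_b by simp
  qed
  have d0b: "(norm (d0 n))^2 \<le> 1/(pi*h)" for n
  proof -
    have "(norm (d0 n))^2 = 1 / \<bar>v n\<bar>" using vpos[of n]
      by (simp add: d0_def norm_divide power_divide)
    then show ?thesis using inv_b by simp
  qed
  define I where "I n m = (LINT y:S|lebesgue. complex_of_real (D y) * exp (\<i> * complex_of_real ((v n - v m) * y)))" for n m
  have cst: "complex_of_real (pi / R_h h) * (\<i> / (2 * complex_of_real pi)) = \<i> * complex_of_real h"
    using h by (simp add: R_h_def field_simps)
  have Beq: "B_mat V h x n m = (\<i> * complex_of_real h) * (c0 n * d0 m * I n m)" for n m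
  proof -
    have "B_mat V h x n m = c0 n * d0 m * (complex_of_real (pi / R_h h) * (\<i> / (2 * complex_of_real pi))) * I n m"
      unfolding B_mat_def A_mat_def Vw_R_def I_def c0_def d0_def v_def D_def Seq by (simp add: mult_ac)
    then show ?thesis unfolding cst by (simp add: mult_ac)
  qed
  have Iint: "set_integrable lebesgue S (\<lambda>y. complex_of_real (D y) * exp (\<i> * complex_of_real (k * y)))" for k
    unfolding S_def
  proof (rule set_int_bounded[where K="2*L"])
    show "(\<lambda>y. complex_of_real (D y) * exp (\<i> * complex_of_real (k * y))) \<in> borel_measurable lebesgue"
      using Dm meas_exp[of k] by measurable
    show "AE y in lebesgue. y \<in> {-R<..<R} \<longrightarrow> norm (complex_of_real (D y) * exp (\<i> * complex_of_real (k * y))) \<le> 2*L"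
      using Db by eventually_elim (simp add: norm_mult)
  qed
  have Hbil: "norm (\<Sum>n\<in>F. \<Sum>m\<in>G. w n * B_mat V h x n m * u m)
      \<le> (2 / (pi * h) * L)/2 * ((\<Sum>n\<in>F. (norm (w n))^2) + (\<Sum>m\<in>G. (norm (u m))^2))"
    if F: "finite F" and G: "finite G" for F G w u
  proof -
    define cc where "cc n = w n * c0 n" for n
    define dd where "dd m = d0 m * u m" for m
    define P where "P y = (\<Sum>n\<in>F. cc n * exp (\<i> * complex_of_real (v n * y)))" for y
    define Q where "Q y = (\<Sum>m\<in>G. dd m * exp (\<i> * complex_of_real ((- v m) * y)))" for y
    define f where "f n m y = cc n * dd m * (complex_of_real (D y) * exp (\<i> * complex_of_real ((v n - v m) * y)))" for n m y
    have fint: "set_integrable lebesgue S (f n m)" for n m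
      unfolding f_def by (rule set_integrable_mult_right) (rule Iint)
    have pw: "complex_of_real (D y) * (P y * Q y) = (\<Sum>n\<in>F. \<Sum>m\<in>G. f n m y)" for y
    proof -
      have "P y * Q y = (\<Sum>n\<in>F. \<Sum>m\<in>G. (cc n * exp (\<i> * complex_of_real (v n * y))) * (dd m * exp (\<i> * complex_of_real ((- v m) * y))))"
        unfolding P_def Q_def by (rule sum_product)
      also have "\<dots> = (\<Sum>n\<in>F. \<Sum>m\<in>G. cc n * dd m * exp (\<i> * complex_of_real ((v n - v m) * y)))"
      proof (intro sum.cong refl)
        fix n m
        show "(cc n * exp (\<i> * complex_of_real (v n * y))) * (dd m * exp (\<i> * complex_of_real ((- v m) * y)))
           = cc n * dd m * exp (\<i> * complex_of_real ((v n - v m) * y))"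
          using exp_prod2[of "v n" y "v m"] by (simp add: mult_ac)
      qed
      finally show ?thesis unfolding f_def by (simp add: sum_distrib_left mult_ac)
    qed
    have sumeq: "(\<Sum>n\<in>F. \<Sum>m\<in>G. w n * B_mat V h x n m * u m)
        = (\<i> * complex_of_real h) * (LINT y:S|lebesgue. complex_of_real (D y) * (P y * Q y))"
    proof -
      have "(\<Sum>n\<in>F. \<Sum>m\<in>G. w n * B_mat V h x n m * u m) = (\<i> * complex_of_real h) * (\<Sum>n\<in>F. \<Sum>m\<in>G. LINT y:S|lebesgue. f n m y)"
        unfolding Beq f_def I_def cc_def dd_def by (simp add: sum_distrib_left mult_ac)
      also have "(\<Sum>n\<in>F. \<Sum>m\<in>G. LINT y:S|lebesgue. f n m y) = (\<Sum>n\<in>F. LINT y:S|lebesgue. \<Sum>m\<in>G. f n m y)"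
        by (intro sum.cong refl set_int_sum(2)[symmetric] fint)
      also have "\<dots> = (LINT y:S|lebesgue. \<Sum>n\<in>F. \<Sum>m\<in>G. f n m y)"
        by (intro set_int_sum(2)[symmetric] set_int_sum(1) fint)
      also have "\<dots> = (LINT y:S|lebesgue. complex_of_real (D y) * (P y * Q y))"
        unfolding pw ..
      finally show ?thesis .
    qed
    have Pc: "continuous_on UNIV P" unfolding P_def by (intro continuous_intros)
    have Qc: "continuous_on UNIV Q" unfolding Q_def by (intro continuous_intros)
    have DPQint: "set_integrable lebesgue S (\<lambda>y. complex_of_real (D y) * (P y * Q y))"
    proof -
      have "set_integrable lebesgue S (\<lambda>y. \<Sum>n\<in>F. \<Sum>m\<in>G. f n m y)"
        by (intro set_int_sum(1) fint)
      then show ?thesis unfolding pw .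
    qed
    have nsqP: "set_integrable lebesgue S (\<lambda>y. (norm (P y))^2)"
      "(LINT y:S|lebesgue. (norm (P y))^2) = (1/h) * (\<Sum>n\<in>F. (norm (cc n))^2)"
      using normsq_int[where c=cc and \<phi>=v and s=1 and h=h and F=F, OF h F _ vdiff]
      unfolding S_def R_def P_def by auto
    have nsqQ: "set_integrable lebesgue S (\<lambda>y. (norm (Q y))^2)"
      "(LINT y:S|lebesgue. (norm (Q y))^2) = (1/h) * (\<Sum>m\<in>G. (norm (dd m))^2)"
      using normsq_int[where c=dd and \<phi>="\<lambda>m. - v m" and s="-1" and h=h and F=G, OF h G _ vdiff']
      unfolding S_def R_def Q_def by auto
    have boundint: "set_integrable lebesgue S (\<lambda>y. L * ((norm (P y))^2 + (norm (Q y))^2))"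
      by (intro set_integrable_mult_right set_integral_add(1) nsqP(1) nsqQ(1))
    have "norm (LINT y:S|lebesgue. complex_of_real (D y) * (P y * Q y))
        \<le> (LINT y:S|lebesgue. norm (complex_of_real (D y) * (P y * Q y)))"
      by (rule set_integral_norm_bound[OF DPQint])
    also have "\<dots> \<le> (LINT y:S|lebesgue. L * ((norm (P y))^2 + (norm (Q y))^2))"
    proof (rule set_integral_mono_AE[OF set_integrable_norm[OF DPQint] boundint])
      show "AE y\<in>S in lebesgue. norm (complex_of_real (D y) * (P y * Q y)) \<le> L * ((norm (P y))^2 + (norm (Q y))^2)"
        using Db
      proof eventually_elim
        case (elim y)
        have "2 * (norm (P y) * norm (Q y)) \<le> (norm (P y))^2 + (norm (Q y))^2"
          using sum_squares_bound[of "norm (P y)" "norm (Q y)"] by (simp add: mult.assoc)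
        moreover have "norm (complex_of_real (D y) * (P y * Q y)) = \<bar>D y\<bar> * (norm (P y) * norm (Q y))"
          by (simp add: norm_mult)
        moreover have "\<bar>D y\<bar> * (norm (P y) * norm (Q y)) \<le> (2*L) * (norm (P y) * norm (Q y))"
          using elim by (intro mult_right_mono) auto
        moreover have "(2*L) * (norm (P y) * norm (Q y)) \<le> L * ((norm (P y))^2 + (norm (Q y))^2)"
          using mult_left_mono[OF \<open>2 * (norm (P y) * norm (Q y)) \<le> (norm (P y))^2 + (norm (Q y))^2\<close> L0]
          by (simp add: mult_ac)
        ultimately show ?case by linarith
      qed
    qed
    also have "\<dots> = L * ((1/h) * (\<Sum>n\<in>F. (norm (cc n))^2) + (1/h) * (\<Sum>m\<in>G. (norm (dd m))^2))"
      using nsqP nsqQ by (simp add: set_integral_add(2))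
    finally have nb: "norm (LINT y:S|lebesgue. complex_of_real (D y) * (P y * Q y))
        \<le> L * ((1/h) * (\<Sum>n\<in>F. (norm (cc n))^2) + (1/h) * (\<Sum>m\<in>G. (norm (dd m))^2))" .
    have ccb: "(\<Sum>n\<in>F. (norm (cc n))^2) \<le> (1/(pi*h)) * (\<Sum>n\<in>F. (norm (w n))^2)"
      unfolding sum_distrib_left
    proof (rule sum_mono)
      fix n
      have "(norm (cc n))^2 = (norm (w n))^2 * (norm (c0 n))^2" by (simp add: cc_def norm_mult power_mult_distrib)
      also have "\<dots> \<le> (norm (w n))^2 * (1/(pi*h))" by (intro mult_left_mono c0b) auto
      finally show "(norm (cc n))^2 \<le> 1/(pi*h) * (norm (w n))^2" by simp
    qed
    have ddb: "(\<Sum>m\<in>G. (norm (dd m))^2) \<le> (1/(pi*h)) * (\<Sum>m\<in>G. (norm (u m))^2)"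
      unfolding sum_distrib_left
    proof (rule sum_mono)
      fix m
      have "(norm (dd m))^2 = (norm (u m))^2 * (norm (d0 m))^2" by (simp add: dd_def norm_mult power_mult_distrib)
      also have "\<dots> \<le> (norm (u m))^2 * (1/(pi*h))" by (intro mult_left_mono d0b) auto
      finally show "(norm (dd m))^2 \<le> 1/(pi*h) * (norm (u m))^2" by simp
    qed
    have "norm (\<Sum>n\<in>F. \<Sum>m\<in>G. w n * B_mat V h x n m * u m)
        = h * norm (LINT y:S|lebesgue. complex_of_real (D y) * (P y * Q y))"
      unfolding sumeq using h by (simp add: norm_mult)
    also have "\<dots> \<le> h * (L * ((1/h) * (\<Sum>n\<in>F. (norm (cc n))^2) + (1/h) * (\<Sum>m\<in>G. (norm (dd m))^2)))"
      using nb h by (intro mult_left_mono) auto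
    also have "\<dots> = L * ((\<Sum>n\<in>F. (norm (cc n))^2) + (\<Sum>m\<in>G. (norm (dd m))^2))"
      using h by (simp add: field_simps)
    also have "\<dots> \<le> L * ((1/(pi*h)) * (\<Sum>n\<in>F. (norm (w n))^2) + (1/(pi*h)) * (\<Sum>m\<in>G. (norm (u m))^2))"
      using ccb ddb L0 by (intro mult_left_mono) auto
    also have "\<dots> = (2 / (pi * h) * L)/2 * ((\<Sum>n\<in>F. (norm (w n))^2) + (\<Sum>m\<in>G. (norm (u m))^2))"
      by (simp add: algebra_simps)
    finally show ?thesis .
  qed
  have C0: "2 / (pi * h) * L \<ge> 0" using L0 h by auto
  show ?thesis unfolding L_def[symmetric]
    by (rule bil_bounded[OF C0]) (rule Hbil)
qed


end
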